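(* Let $\mathbb{X}=\{1,2,3,\dots\}$ and let $\mu$ satisfy, for some $p>1$ and constants $0<k_0\le k_1$, $k_0x^{-p}\le\mu(\{x\})\le k_1x^{-p}$ for all $x$. Let $\tau\in(0,p)$ and let $(\epsilon_n)$ satisfy $cn^{-\tau}\le\epsilon_n\le Cn^{-\tau}$ for constants $0<c\le C$ (with $\epsilon_n<1$). Define $$\xi_n=\log\frac1{\epsilon_n}\cdot\sup_{A\in\sigma(\tilde\Gamma_{\epsilon_n/2})}|\mu(A)-\hat\mu_n(A)|.$$ Then $\xi_n\to0$ $\mathbb{P}_\mu$-a.s., and moreover $\xi_n=o(n^{-q})$ $\mathbb{P}_\mu$-a.s. for every $q\in\big(0,\frac{1-\tau/p}{2}\big)$.
   Context: $\log$ is the logarithm to a fixed base $b>1$. Given i.i.d. $X_1,X_2,\dots\sim\mu$ with law $\mathbb{P}_\mu$, $\hat\mu_n(A)=\frac1n\sum_{k=1}^n\mathbb{1}_A(X_k)$. For $\epsilon>0$ the (deterministic) oracle set is $\tilde\Gamma_\epsilon=\{x\in\mathbb{X}:\mu(\{x\})\ge\epsilon\}$, and $\sigma(\tilde\Gamma_\epsilon)$ is the finite $\sigma$-field generated by the partition $\{\{x\}:x\in\tilde\Gamma_\epsilon\}\cup\{\mathbb{X}\setminus\tilde\Gamma_\epsilon\}$. *)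

theory Defs
  imports "HOL-Probability.Probability" "HOL-Library.Landau_Symbols"
begin

text \<open>Empirical measure of A after n observations of the sequence X at outcome w
  (observations indexed 0..n-1, corresponding to X_1..X_n of the paper).\<close>
definition emp_measure :: "(nat \<Rightarrow> 'a \<Rightarrow> 'b) \<Rightarrow> nat \<Rightarrow> 'b set \<Rightarrow> 'a \<Rightarrow> real" where
  "emp_measure X n A w = (1 / real n) * (\<Sum>k<n. indicator A (X k w))"

definition oracle_set :: "'b pmf \<Rightarrow> real \<Rightarrow> 'b set" where
  "oracle_set \<mu> eps = {x. pmf \<mu> x \<ge> eps}"

definition oracle_sigma :: "'b set \<Rightarrow> 'b set set" where
  "oracle_sigma G = sigma_sets UNIV ({{x} | x. x \<in> G} \<union> {UNIV - G})"

definition xi :: "real \<Rightarrow> 'b pmf \<Rightarrow> (nat \<Rightarrow> 'a \<Rightarrow> 'b) \<Rightarrow> (nat \<Rightarrow> real) \<Rightarrow> nat \<Rightarrow> 'a \<Rightarrow> real" where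
  "xi b \<mu> X eps n w = log b (1 / eps n) *
     (SUP A\<in>oracle_sigma (oracle_set \<mu> (eps n / 2)).
        \<bar>measure_pmf.prob \<mu> A - emp_measure X n A w\<bar>)"

end

theory Submission
  imports Defs "HOL-Real_Asymp.Real_Asymp"
begin

lemma hoeff_set:
  fixes M :: "'a measure" and X :: "nat \<Rightarrow> 'a \<Rightarrow> nat" and \<mu> :: "nat pmf"
  assumes P: "prob_space M"
    and Xm: "\<And>k. X k \<in> measurable M (count_space UNIV)"
    and ind: "prob_space.indep_vars M (\<lambda>_. count_space UNIV) X UNIV"
    and dX: "\<And>k. distr M (count_space UNIV) (X k) = measure_pmf \<mu>"
    and n: "n \<ge> 1" and t: "t \<ge> 0"
  shows "measure M {w\<in>space M. \<bar>measure_pmf.prob \<mu> A - emp_measure X n A w\<bar> \<ge> t}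
          \<le> 2 * exp (-2 * real n * t\<^sup>2)"
proof -
  interpret prob_space M by (rule P)
  let ?Z = "\<lambda>i w. indicator A (X i w) :: real"
  have im: "(\<lambda>x. indicator A x :: real) \<in> borel_measurable (count_space UNIV)" by simp
  have dZ: "distr M borel (?Z i) = distr (measure_pmf \<mu>) borel (indicator A)" for i
  proof -
    have "distr M borel (?Z i) = distr (distr M (count_space UNIV) (X i)) borel (indicator A)"
      by (subst distr_distr[OF im Xm]) (simp add: comp_def)
    then show ?thesis by (simp add: dX)
  qed
  have E: "expectation (?Z 0) = measure_pmf.prob \<mu> A"
  proof -
    have "expectation (?Z 0) = integral\<^sup>L (distr M (count_space UNIV) (X 0)) (indicator A)"
      by (subst integral_distr[OF Xm im]) simp
    also have "\<dots> = measure_pmf.prob \<mu> A" by (simp add: dX)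
    finally show ?thesis .
  qed
  interpret Hoeffding_ineq_iid M "{..<n}" ?Z "?Z 0" 0 1 "measure_pmf.prob \<mu> A"
  proof unfold_locales
    show "indep_vars (\<lambda>_. borel) ?Z {..<n}"
      by (rule indep_vars_compose2[OF indep_vars_subset[OF ind]]) auto
    show "distr M borel (?Z i) = distr M borel (?Z 0)" for i by (simp add: dZ)
    show "random_variable borel (?Z 0)" using Xm by simp
    show "AE x in M. ?Z 0 x \<in> {0..1}" by (simp add: indicator_def)
    show "measure_pmf.prob \<mu> A \<equiv> expectation (?Z 0)" using E by simp
  qed auto
  have ne: "{..<n} \<noteq> {}" using n by (metis lessThan_iff empty_iff less_le_trans zero_less_one)
  have "prob {x\<in>space M. \<bar>(\<Sum>i\<in>{..<n}. ?Z i x) / real (card {..<n}) - measure_pmf.prob \<mu> A\<bar> \<ge> t}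
        \<le> 2 * exp (-2 * real (card {..<n}) * t\<^sup>2 / (1 - 0)\<^sup>2)"
    by (rule Hoeffding_ineq_abs_ge'[OF t _ ne]) simp
  moreover have "{w\<in>space M. \<bar>measure_pmf.prob \<mu> A - emp_measure X n A w\<bar> \<ge> t} =
      {x\<in>space M. \<bar>(\<Sum>i\<in>{..<n}. ?Z i x) / real (card {..<n}) - measure_pmf.prob \<mu> A\<bar> \<ge> t}"
    by (auto simp: emp_measure_def abs_minus_commute)
  ultimately show ?thesis by simp
qed


lemma oracle_sigma_cases:
  assumes "A \<in> oracle_sigma G"
  shows "- G \<subseteq> A \<or> A \<inter> - G = {}"
  using assms unfolding oracle_sigma_def
proof (induction rule: sigma_sets.induct)
  case (Union a)
  then show ?case by (cases "\<exists>i. - G \<subseteq> a i") blast+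
qed auto

lemma oracle_sigma_sub:
  "oracle_sigma G \<subseteq> (\<lambda>(B,e). B \<union> (if e then - G else {})) ` (Pow G \<times> UNIV)"
proof
  fix A assume A: "A \<in> oracle_sigma G"
  have "A = (\<lambda>(B,e). B \<union> (if e then - G else {})) (A \<inter> G, - G \<subseteq> A)"
    using oracle_sigma_cases[OF A] by auto
  then show "A \<in> (\<lambda>(B,e). B \<union> (if e then - G else {})) ` (Pow G \<times> UNIV)"
    by (metis (no_types, lifting) Int_lower2 PowI SigmaI UNIV_I image_eqI)
qed

lemma oracle_sigma_finite_card:
  assumes "finite G"
  shows "finite (oracle_sigma G) \<and> card (oracle_sigma G) \<le> 2 ^ card G * 2"
proof -
  let ?f = "\<lambda>(B,e). B \<union> (if e then - G else {})"
  have f: "finite (Pow G \<times> (UNIV::bool set))" using assms by simp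
  have "card (oracle_sigma G) \<le> card (?f ` (Pow G \<times> UNIV))"
    by (rule card_mono[OF finite_imageI[OF f] oracle_sigma_sub])
  also have "\<dots> \<le> card (Pow G \<times> (UNIV::bool set))" by (rule card_image_le[OF f])
  also have "\<dots> = 2 ^ card G * 2" using assms by (simp add: card_cartesian_product card_Pow)
  finally show ?thesis using finite_subset[OF oracle_sigma_sub finite_imageI[OF f]] by simp
qed

lemma empty_in_oracle_sigma: "{} \<in> oracle_sigma G"
  unfolding oracle_sigma_def by (rule sigma_sets.Empty)

lemma emp_bounds: "0 \<le> emp_measure X n A w \<and> emp_measure X n A w \<le> 1"
proof (cases "n = 0")
  case True then show ?thesis by (simp add: emp_measure_def)
next
  case False
  have "(\<Sum>k<n. indicator A (X k w) :: real) \<le> (\<Sum>k<n. 1)"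
    by (intro sum_mono) (simp add: indicator_def)
  then have "(\<Sum>k<n. indicator A (X k w) :: real) \<le> real n" by simp
  moreover have "0 \<le> (\<Sum>k<n. indicator A (X k w) :: real)" by (intro sum_nonneg) simp
  ultimately show ?thesis using False by (simp add: emp_measure_def field_simps)
qed


lemma oracle_card:
  fixes \<mu> :: "nat pmf" and p k1 e :: real
  assumes "p > 1" "0 < e" "pmf \<mu> 0 = 0"
    and bd: "\<And>x. x \<ge> 1 \<Longrightarrow> pmf \<mu> x \<le> k1 * real x powr (-p)"
  shows "finite (oracle_set \<mu> (e/2)) \<and> real (card (oracle_set \<mu> (e/2))) \<le> (2*k1/e) powr (1/p)"
proof -
  let ?R = "(2*k1/e) powr (1/p)"
  have x: "x \<ge> 1 \<and> real x \<le> ?R" if "x \<in> oracle_set \<mu> (e/2)" for x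
  proof -
    have px: "pmf \<mu> x \<ge> e/2" using that by (simp add: oracle_set_def)
    have "x \<noteq> 0"
    proof
      assume "x = 0" then have "pmf \<mu> x = 0" using assms(3) by simp
      with px assms(2) show False by linarith
    qed
    then have x1: "x \<ge> 1" by simp
    have "e/2 \<le> k1 * real x powr (-p)" using px bd[OF x1] by linarith
    moreover have "real x powr (-p) = 1 / real x powr p" by (rule powr_minus_divide)
    ultimately have h: "e/2 \<le> k1 / real x powr p" by simp
    have xp: "real x powr p > 0" using x1 by simp
    from h xp have "e/2 * real x powr p \<le> k1" by (simp add: le_divide_eq)
    then have "real x powr p \<le> 2*k1/e" using assms(2) by (simp add: le_divide_eq mult.commute)
    then have "(real x powr p) powr (1/p) \<le> ?R" using assms(1) xp by (intro powr_mono2) auto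
    moreover have "(real x powr p) powr (1/p) = real x" using assms(1) x1 by (simp add: powr_powr)
    ultimately have "real x \<le> ?R" by simp
    then show ?thesis using x1 by simp
  qed
  have sub: "oracle_set \<mu> (e/2) \<subseteq> {1..nat \<lfloor>?R\<rfloor>}"
  proof
    fix x assume "x \<in> oracle_set \<mu> (e/2)"
    with x have "x \<ge> 1" "real x \<le> ?R" by auto
    then show "x \<in> {1..nat \<lfloor>?R\<rfloor>}" by (simp add: le_nat_floor)
  qed
  have c1: "card (oracle_set \<mu> (e/2)) \<le> nat \<lfloor>?R\<rfloor>"
    using card_mono[OF _ sub] by simp
  have "real (nat \<lfloor>?R\<rfloor>) \<le> ?R"
    using of_int_floor_le[of ?R] by (cases "\<lfloor>?R\<rfloor> \<ge> 0") auto
  then have "real (card (oracle_set \<mu> (e/2))) \<le> ?R" using c1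
    by (meson of_nat_le_iff order_trans)
  then show ?thesis using finite_subset[OF sub] by simp
qed


theorem mainTheorem13:
  fixes M :: "'a measure" and X :: "nat \<Rightarrow> 'a \<Rightarrow> nat" and \<mu> :: "nat pmf"
    and b p k0 k1 \<tau> c C :: real and eps :: "nat \<Rightarrow> real"
  assumes "prob_space M"
    and "\<And>k. X k \<in> measurable M (count_space UNIV)"
    and "prob_space.indep_vars M (\<lambda>_. count_space UNIV) X UNIV"
    and "\<And>k. distr M (count_space UNIV) (X k) = measure_pmf \<mu>"
    and "b > 1"
    and "p > 1" and "0 < k0" and "k0 \<le> k1"
    and "pmf \<mu> 0 = 0"
    and "\<And>x. x \<ge> 1 \<Longrightarrow> k0 * real x powr (-p) \<le> pmf \<mu> x \<and> pmf \<mu> x \<le> k1 * real x powr (-p)"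
    and "0 < \<tau>" and "\<tau> < p"
    and "0 < c" and "c \<le> C"
    and "\<And>n. n \<ge> 1 \<Longrightarrow> c * real n powr (-\<tau>) \<le> eps n \<and> eps n \<le> C * real n powr (-\<tau>)"
    and "\<And>n. n \<ge> 1 \<Longrightarrow> eps n < 1"
  shows "(AE w in M. (\<lambda>n. xi b \<mu> X eps n w) \<longlonglongrightarrow> 0) \<and>
         (\<forall>q. 0 < q \<and> q < (1 - \<tau> / p) / 2 \<longrightarrow>
            (AE w in M. (\<lambda>n. xi b \<mu> X eps n w) \<in> o(\<lambda>n. real n powr (-q))))"
proof -
  note P = assms(1) and Xm = assms(2) and ind = assms(3) and dX = assms(4)
  interpret prob_space M by (rule P)
  define \<alpha> where "\<alpha> = \<tau> / p"
  define K where "K = (2*k1/c) powr (1/p)"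
  define G where "G n = oracle_set \<mu> (eps n / 2)" for n
  define S where "S n = oracle_sigma (G n)" for n
  define h where "h q' n = (\<tau> * ln (real n) - ln c) / ln b * real n powr (-q')" for q' n
  have p1: "p > 1" and k1: "k1 > 0" and c0: "c > 0" and b1: "b > 1" and tau: "\<tau> > 0"
    using assms by auto
  have \<alpha>: "0 < \<alpha>" "\<alpha> < 1" using assms by (auto simp: \<alpha>_def)
  have K0: "K > 0" using k1 c0 by (simp add: K_def)
  have epspos: "eps n > 0" if "n \<ge> 1" for n
  proof -
    have "c * real n powr (-\<tau>) > 0" using c0 that by simp
    then show ?thesis using assms(15)[OF that] by linarith
  qed
  have cardG: "finite (G n) \<and> real (card (G n)) \<le> K * real n powr \<alpha>" if n: "n \<ge> 1" for n
  proof -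
    have e: "eps n > 0" by (rule epspos[OF n])
    have oc: "finite (G n) \<and> real (card (G n)) \<le> (2*k1/eps n) powr (1/p)"
      unfolding G_def by (rule oracle_card[OF p1 e assms(9)]) (use assms(10) in blast)
    have le1: "c * real n powr (-\<tau>) \<le> eps n" using assms(15)[OF n] by simp
    have np: "real n powr (-\<tau>) > 0" using n by simp
    have "2*k1/eps n \<le> 2*k1/(c * real n powr (-\<tau>))"
      using le1 np c0 k1 e by (intro divide_left_mono) auto
    also have "\<dots> = (2*k1/c) * real n powr \<tau>"
      using np c0 by (simp add: powr_minus field_simps)
    finally have "(2*k1/eps n) powr (1/p) \<le> ((2*k1/c) * real n powr \<tau>) powr (1/p)"
      using e k1 p1 by (intro powr_mono2) auto
    also have "\<dots> = (2*k1/c) powr (1/p) * (real n powr \<tau>) powr (1/p)"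
      by (rule powr_mult)
    also have "\<dots> = K * real n powr \<alpha>"
      by (simp add: K_def \<alpha>_def powr_powr)
    finally show ?thesis using oc by simp
  qed
  have Sfin: "finite (S n) \<and> card (S n) \<le> 2 ^ card (G n) * 2" if "n \<ge> 1" for n
    unfolding S_def using oracle_sigma_finite_card cardG[OF that] by blast
  have absle1: "\<bar>measure_pmf.prob \<mu> A - emp_measure X n A w\<bar> \<le> 1" for A n w
    using emp_bounds[of X n A w] measure_pmf.prob_le_1[of \<mu> A] measure_nonneg[of "measure_pmf \<mu>" A]
    by linarith
  have empm: "(\<lambda>w. emp_measure X n A w) \<in> borel_measurable M" for n A
  proof -
    have "(\<lambda>w. indicator A (X k w) :: real) \<in> borel_measurable M" for k
      using measurable_comp[OF Xm[of k] borel_measurable_count_space[of "indicator A" UNIV]]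
      by (simp add: comp_def)
    then show ?thesis unfolding emp_measure_def by measurable
  qed
  have L: "AE w in M. eventually (\<lambda>n. \<bar>xi b \<mu> X eps n w\<bar> \<le> h q' n) sequentially"
    if q': "0 < q'" "q' < (1 - \<alpha>) / 2" for q'
  proof -
    define d where "d = 1 - 2*q' - \<alpha>"
    have d: "d > 0" using q' by (simp add: d_def)
    define t where "t n = real n powr (-q')" for n
    define B where "B n = (if n \<ge> 1 then (\<Union>A\<in>S n. {w\<in>space M. t n \<le> \<bar>measure_pmf.prob \<mu> A - emp_measure X n A w\<bar>}) else {})" for n
    define F where "F n = 4 * exp (ln 2 * K * real n powr \<alpha> - 2 * real n powr (\<alpha> + d))" for n
    define Ev where "Ev n A = {w\<in>space M. t n \<le> \<bar>measure_pmf.prob \<mu> A - emp_measure X n A w\<bar>}" for n A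
    have Evm: "Ev n A \<in> sets M" for n A
    proof -
      have fm: "(\<lambda>w. \<bar>measure_pmf.prob \<mu> A - emp_measure X n A w\<bar>) \<in> borel_measurable M"
        by (rule borel_measurable_abs[OF borel_measurable_diff[OF borel_measurable_const empm]])
      have "Ev n A = (\<lambda>w. \<bar>measure_pmf.prob \<mu> A - emp_measure X n A w\<bar>) -` {t n..} \<inter> space M"
        unfolding Ev_def vimage_def by blast
      moreover have "(\<lambda>w. \<bar>measure_pmf.prob \<mu> A - emp_measure X n A w\<bar>) -` {t n..} \<inter> space M \<in> sets M"
        by (rule measurable_sets[OF fm]) simp
      ultimately show ?thesis by (simp only:)
    qed
    have BEv: "B n = (\<Union>A\<in>S n. Ev n A)" if "n \<ge> 1" for n
      using that unfolding B_def Ev_def by simp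
    have Bm: "B n \<in> sets M" for n
    proof (cases "n \<ge> 1")
      case True
      show ?thesis unfolding BEv[OF True]
        by (rule sets.finite_UN[OF conjunct1[OF Sfin[OF True]]]) (rule Evm)
    qed (simp add: B_def)
    have BF: "measure M (B n) \<le> F n" if n: "n \<ge> 1" for n
    proof -
      have tt: "t n \<ge> 0" by (simp add: t_def)
      have e1: "real n * (t n)\<^sup>2 = real n powr (\<alpha> + d)"
      proof -
        have "(t n)\<^sup>2 = real n powr (-q') * real n powr (-q')"
          unfolding t_def by (simp add: power2_eq_square)
        also have "\<dots> = real n powr (-q' + -q')" by (rule powr_add[symmetric])
        finally have t2: "(t n)\<^sup>2 = real n powr (-q' + -q')" .
        have "real n powr 1 * real n powr (-q' + -q') = real n * (t n)\<^sup>2" using t2 by simp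
        then have "real n * (t n)\<^sup>2 = real n powr 1 * real n powr (-q' + -q')" by (rule sym)
        also have "\<dots> = real n powr (1 + (-q' + -q'))" by (rule powr_add[symmetric])
        also have "1 + (-q' + -q') = \<alpha> + d" by (simp add: d_def)
        finally show ?thesis .
      qed
      have "measure M (B n) \<le> (\<Sum>A\<in>S n. measure M (Ev n A))"
        unfolding BEv[OF n] by (rule measure_UNION_le[OF conjunct1[OF Sfin[OF n]]]) (rule Evm)
      also have "\<dots> \<le> (\<Sum>A\<in>S n. 2 * exp (-2 * real n * (t n)\<^sup>2))"
        unfolding Ev_def by (intro sum_mono hoeff_set[OF P Xm ind dX n tt])
      also have "\<dots> = real (card (S n)) * (2 * exp (-2 * real n powr (\<alpha> + d)))"
        using e1 by (simp add: mult.assoc)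
      also have "\<dots> \<le> (2 ^ card (G n) * 2) * (2 * exp (-2 * real n powr (\<alpha> + d)))"
      proof -
        have "real (card (S n)) \<le> 2 ^ card (G n) * 2"
          using Sfin[OF n] of_nat_le_iff[of "card (S n)" "2 ^ card (G n) * 2", where 'a=real] by simp
        then show ?thesis by (intro mult_right_mono) auto
      qed
      also have "\<dots> = 4 * exp (ln 2 * real (card (G n))) * exp (-2 * real n powr (\<alpha> + d))"
      proof -
        have "(2::real) ^ card (G n) = exp (ln 2 * real (card (G n)))"
          by (subst mult.commute, subst exp_of_nat_mult) simp
        then show ?thesis by simp
      qed
      also have "\<dots> \<le> 4 * exp (ln 2 * K * real n powr \<alpha>) * exp (-2 * real n powr (\<alpha> + d))"
      proof -
        have "ln 2 * real (card (G n)) \<le> ln 2 * (K * real n powr \<alpha>)"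
          using cardG[OF n] by (intro mult_left_mono) auto
        then have "exp (ln 2 * real (card (G n))) \<le> exp (ln 2 * K * real n powr \<alpha>)"
          by (simp add: mult.assoc)
        then show ?thesis by (intro mult_right_mono) auto
      qed
      also have "\<dots> = F n" by (simp add: F_def exp_diff exp_minus field_simps)
      finally show ?thesis .
    qed
    have "((\<lambda>n::nat. real n ^ 2 * (4 * exp (ln 2 * K * real n powr \<alpha> - 2 * real n powr (\<alpha> + d)))) \<longlongrightarrow> 0) at_top"
      using \<alpha>(1) d K0 by real_asymp
    then have "eventually (\<lambda>n. real n ^ 2 * F n < 1) at_top"
      unfolding F_def by (rule order_tendstoD) simp
    then obtain N where N: "\<And>n. n \<ge> N \<Longrightarrow> real n ^ 2 * F n < 1"
      by (auto simp: eventually_at_top_linorder)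
    have "summable (\<lambda>n. measure M (B n))"
    proof (rule summable_comparison_test'[OF inverse_power_summable[of 2]])
      fix n assume "n \<ge> Suc N"
      then have n: "n \<ge> 1" "n \<ge> N" by auto
      have "F n \<le> inverse (real n ^ 2)"
        using N[OF n(2)] n(1) by (simp add: field_simps)
      then show "norm (measure M (B n)) \<le> inverse (real n ^ 2)"
        using BF[OF n(1)] by simp
    qed simp
    then have ae: "AE w in M. eventually (\<lambda>n. w \<in> space M - B n) sequentially"
      by (intro borel_cantelli_AE1 Bm) (auto simp: less_top[symmetric])
    show ?thesis
    proof (rule AE_mp[OF ae], rule AE_I2, rule impI)
      fix w assume w: "w \<in> space M" and ev: "eventually (\<lambda>n. w \<in> space M - B n) sequentially"
      show "eventually (\<lambda>n. \<bar>xi b \<mu> X eps n w\<bar> \<le> h q' n) sequentially"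
        using ev eventually_ge_at_top[of "1::nat"]
      proof eventually_elim
        case (elim n)
        then have n: "n \<ge> 1" and nB: "w \<notin> B n" by auto
        have lt: "\<bar>measure_pmf.prob \<mu> A - emp_measure X n A w\<bar> < t n" if "A \<in> S n" for A
          using nB w that n by (auto simp: B_def not_le)
        have Sne: "S n \<noteq> {}" using empty_in_oracle_sigma by (auto simp: S_def)
        have bdd: "bdd_above ((\<lambda>A. \<bar>measure_pmf.prob \<mu> A - emp_measure X n A w\<bar>) ` S n)"
          using absle1 by (intro bdd_aboveI2) blast
        define sp where "sp = (SUP A\<in>S n. \<bar>measure_pmf.prob \<mu> A - emp_measure X n A w\<bar>)"
        have sp1: "sp \<le> t n" unfolding sp_def
          using lt by (intro cSUP_least[OF Sne]) (simp add: less_imp_le)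
        have sp0: "0 \<le> sp" unfolding sp_def
          using empty_in_oracle_sigma by (intro cSUP_upper2[OF bdd, of "{}"]) (auto simp: S_def)
        have e: "eps n > 0" "eps n < 1" using epspos[OF n] assms(16)[OF n] by auto
        have lg0: "0 \<le> log b (1 / eps n)" using e b1 by simp
        have "1 / eps n \<le> real n powr \<tau> / c"
        proof -
          have "c * real n powr (-\<tau>) \<le> eps n" using assms(15)[OF n] by simp
          then have "c / real n powr \<tau> \<le> eps n" by (simp add: powr_minus divide_inverse)
          then show ?thesis using e c0 n by (simp add: field_simps)
        qed
        then have "log b (1 / eps n) \<le> log b (real n powr \<tau> / c)"
          using e b1 n c0 by (subst log_le_cancel_iff) auto  
        also have "\<dots> = (\<tau> * ln (real n) - ln c) / ln b"
          using n c0 by (simp add: log_def ln_div ln_powr)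
        finally have lg: "log b (1 / eps n) \<le> (\<tau> * ln (real n) - ln c) / ln b" .
        have "xi b \<mu> X eps n w = log b (1 / eps n) * sp"
          by (simp add: xi_def sp_def G_def S_def)
        moreover have "log b (1 / eps n) * sp \<le> (\<tau> * ln (real n) - ln c) / ln b * t n"
          using lg sp1 sp0 lg0 by (intro mult_mono) auto
        ultimately show ?case using lg0 sp0 by (simp add: h_def t_def)
      qed
    qed
  qed
  show ?thesis
  proof
    define q0 where "q0 = (1 - \<alpha>) / 4"
    have q0: "0 < q0" "q0 < (1 - \<alpha>) / 2" using \<alpha> by (auto simp: q0_def)
    have ht: "(h q0 \<longlongrightarrow> 0) sequentially"
      unfolding h_def using q0(1) b1 by real_asymp
    show "AE w in M. (\<lambda>n. xi b \<mu> X eps n w) \<longlonglongrightarrow> 0"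
      using L[OF q0]
    proof (rule AE_mp, intro AE_I2 impI)
      fix w assume "eventually (\<lambda>n. \<bar>xi b \<mu> X eps n w\<bar> \<le> h q0 n) sequentially"
      then show "(\<lambda>n. xi b \<mu> X eps n w) \<longlonglongrightarrow> 0"
        by (intro Lim_null_comparison[OF _ ht]) simp
    qed
  next
    show "\<forall>q. 0 < q \<and> q < (1 - \<tau> / p) / 2 \<longrightarrow>
            (AE w in M. (\<lambda>n. xi b \<mu> X eps n w) \<in> o(\<lambda>n. real n powr (-q)))"
    proof (intro allI impI)
      fix q assume q: "0 < q \<and> q < (1 - \<tau> / p) / 2"
      define dd where "dd = ((1 - \<alpha>) / 2 - q) / 2"
      have dd: "dd > 0" using q by (simp add: dd_def \<alpha>_def)
      have qa: "q < (1 - \<alpha>) / 2" using q by (simp add: \<alpha>_def)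
      have q'1: "0 < q + dd" using q dd by simp
      have "q + dd = (q + (1 - \<alpha>) / 2) / 2" unfolding dd_def by (simp add: field_simps)
      then have q'2: "q + dd < (1 - \<alpha>) / 2" using qa by simp
      note q' = q'1 q'2
      have ho: "h (q + dd) \<in> o(\<lambda>n. real n powr (-q))"
        unfolding h_def using dd q b1 by real_asymp
      show "AE w in M. (\<lambda>n. xi b \<mu> X eps n w) \<in> o(\<lambda>n. real n powr (-q))"
        using L[OF q']
      proof (rule AE_mp, intro AE_I2 impI)
        fix w assume ev: "eventually (\<lambda>n. \<bar>xi b \<mu> X eps n w\<bar> \<le> h (q + dd) n) sequentially"
        have "(\<lambda>n. xi b \<mu> X eps n w) \<in> O(h (q + dd))"
          by (rule bigoI[where c = 1]) (use ev in \<open>auto elim: eventually_mono\<close>)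
        then show "(\<lambda>n. xi b \<mu> X eps n w) \<in> o(\<lambda>n. real n powr (-q))"
          using ho by (rule landau_o.big_small_trans)
      qed
    qed
  qed
qed

end
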